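(* Let $(\mathcal{U},\mathcal{S},k)$ be a Set Cover instance with $\mathcal{U}=\bigcup_{A\in\mathcal{S}}A$, let $x\ge1$, $0<y\le 1$, and let $\mathcal{G}$ be the fitness graph constructed below, with $n=|V|$. Let $X_1\subseteq V$ be a configuration such that some node $v\in V_2\setminus X_1$ has no in-neighbour in $X_1\cap V_1$ (i.e., $v$ is resident and not covered by the sets in $X_1\cap V_1$). Then, starting from $X_1$, the Heterogeneous Moran process reaches a configuration $X_2$ with $X_2\cap V_1=\emptyset$ with probability at least $\left(\frac{1/n}{1/n+(n-1)y}\right)^{|V_1|}$.
   Context: Construction: $V=V_1\cup V_2$ with $V_1=\mathcal{S}$ and $V_2=\mathcal{U}$; $E=\{(A,v)\in V_1\times V_2: v\in A\}\cup(V_2\times V_1)$; $w(u,v)=1/d(u)$ for $(u,v)\in E$, $d(u)$ the out-degree of $u$. Resident fitness $r\equiv 1$; mutant fitness $m(u)=x$ on $V_1$ and $m(u)=y$ on $V_2$. For a configuration (set of mutants) $X$, $f_X(u)=m(u)$ if $u\in X$, else $r(u)$. The Heterogeneous Moran process: from configuration $X$, pick $u$ with probability $f_X(u)/\sum_v f_X(v)$, then $v$ with probability $w(u,v)$, and $v$ takes the type of $u$. *)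

theory Defs
  imports Complex_Main
begin

definition outdeg :: "('v \<times> 'v) set \<Rightarrow> 'v \<Rightarrow> nat" where
  "outdeg E u = card {v. (u, v) \<in> E}"

definition wt :: "('v \<times> 'v) set \<Rightarrow> 'v \<Rightarrow> 'v \<Rightarrow> real" where
  "wt E u v = (if (u, v) \<in> E then 1 / real (outdeg E u) else 0)"

definition fit :: "('v \<Rightarrow> real) \<Rightarrow> 'v set \<Rightarrow> 'v \<Rightarrow> real" where
  "fit m X u = (if u \<in> X then m u else 1)"

text \<open>Node v takes the type of node u.\<close>
definition upd :: "'v set \<Rightarrow> 'v \<Rightarrow> 'v \<Rightarrow> 'v set" where
  "upd X u v = (if u \<in> X then insert v X else X - {v})"

text \<open>Probability of having entered a target set of configurations T within t steps,
  starting from configuration X. If the chosen reproducer has no out-neighbour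
  the configuration stays unchanged.\<close>
primrec moran_reach ::
  "'v set \<Rightarrow> ('v \<times> 'v) set \<Rightarrow> ('v \<Rightarrow> real) \<Rightarrow> ('v set \<Rightarrow> bool) \<Rightarrow> nat \<Rightarrow> 'v set \<Rightarrow> real" where
  "moran_reach V E m T 0 X = (if T X then 1 else 0)"
| "moran_reach V E m T (Suc t) X =
     (if T X then 1 else
       (\<Sum>u\<in>V. fit m X u / (\<Sum>z\<in>V. fit m X z) *
          ((\<Sum>v\<in>V. wt E u v * moran_reach V E m T t (upd X u v))
           + (if outdeg E u = 0 then moran_reach V E m T t X else 0))))"

definition moran_hit ::
  "'v set \<Rightarrow> ('v \<times> 'v) set \<Rightarrow> ('v \<Rightarrow> real) \<Rightarrow> ('v set \<Rightarrow> bool) \<Rightarrow> 'v set \<Rightarrow> real" where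
  "moran_hit V E m T X = (SUP t. moran_reach V E m T t X)"

definition sc_V1 :: "'a set set \<Rightarrow> ('a set + 'a) set" where
  "sc_V1 S = Inl ` S"

definition sc_V2 :: "'a set \<Rightarrow> ('a set + 'a) set" where
  "sc_V2 U = Inr ` U"

definition sc_V :: "'a set \<Rightarrow> 'a set set \<Rightarrow> ('a set + 'a) set" where
  "sc_V U S = sc_V1 S \<union> sc_V2 U"

definition sc_E :: "'a set \<Rightarrow> 'a set set \<Rightarrow> (('a set + 'a) \<times> ('a set + 'a)) set" where
  "sc_E U S = {(Inl A, Inr v) | A v. A \<in> S \<and> v \<in> A} \<union> (sc_V2 U \<times> sc_V1 S)"

definition sc_mut :: "real \<Rightarrow> real \<Rightarrow> ('a set + 'a) \<Rightarrow> real" where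
  "sc_mut x y u = (case u of Inl _ \<Rightarrow> x | Inr _ \<Rightarrow> y)"

end

theory Submission imports Defs begin

locale lem3 =
  fixes U :: "'a set" and S :: "'a set set" and x y :: real and a :: 'a
  assumes finU: "finite U" and UU: "U = \<Union>S" and x1: "x \<ge> 1" and y0: "0 < y"
    and y1: "y \<le> 1" and aU: "a \<in> U"
begin

abbreviation "V \<equiv> sc_V U S"
abbreviation "E \<equiv> sc_E U S"
abbreviation "M \<equiv> sc_mut x y"
abbreviation "V1 \<equiv> sc_V1 S"
abbreviation "V2 \<equiv> sc_V2 U"
abbreviation "n \<equiv> card V"
abbreviation "N \<equiv> card V1"
abbreviation "z0 \<equiv> (Inr a :: 'a set + 'a)"

definition "q = (1 / real n) / (1 / real n + (real n - 1) * y)"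

definition good :: "('a set + 'a) set \<Rightarrow> bool" where
  "good X \<longleftrightarrow> X \<subseteq> V \<and> z0 \<notin> X \<and> (\<forall>A. Inl A \<in> X \<longrightarrow> a \<notin> A)"

definition f :: "('a set + 'a) set \<Rightarrow> real" where
  "f X = (if good X then q ^ card (X \<inter> V1) else 0)"

definition P :: "(('a set + 'a) set \<Rightarrow> real) \<Rightarrow> ('a set + 'a) set \<Rightarrow> real" where
  "P g X = (\<Sum>u\<in>V. fit M X u / (\<Sum>z\<in>V. fit M X z) *
          ((\<Sum>v\<in>V. wt E u v * g (upd X u v))
           + (if outdeg E u = 0 then g X else 0)))"

lemma finS: "finite S"
proof -
  have "S \<subseteq> Pow U" using UU by auto
  then show ?thesis using finU by (simp add: finite_subset)
qed

lemma finV1: "finite V1" using finS by (simp add: sc_V1_def)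
lemma finV2: "finite V2" using finU by (simp add: sc_V2_def)
lemma finV: "finite V" using finV1 finV2 by (simp add: sc_V_def)
lemma disj: "V1 \<inter> V2 = {}" by (auto simp: sc_V1_def sc_V2_def)
lemma cardV: "n = N + card V2"
  unfolding sc_V_def using finV1 finV2 disj by (simp add: card_Un_disjoint)
lemma cardV2: "card V2 = card U" by (simp add: sc_V2_def card_image)
lemma z0V: "z0 \<in> V" "z0 \<in> V2" using aU by (auto simp: sc_V_def sc_V2_def)
lemma n_pos: "n \<ge> 1"
proof -
  have "card V > 0" using z0V(1) finV by (auto simp: card_gt_0_iff)
  then show ?thesis by simp
qed
lemma N_lt: "N < n"
proof -
  have "card U > 0" using aU finU card_gt_0_iff by blast
  then show ?thesis using cardV cardV2 by linarith
qed

lemma out_sub: "u \<in> V \<Longrightarrow> {v. (u, v) \<in> E} \<subseteq> V"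
  using UU by (auto simp: sc_E_def sc_V_def sc_V1_def sc_V2_def)

lemma out_z0: "{v. (z0, v) \<in> E} = V1"
  using aU by (auto simp: sc_E_def sc_V1_def sc_V2_def)

lemma inner1:
  assumes "u \<in> V"
  shows "(\<Sum>v\<in>V. wt E u v) + (if outdeg E u = 0 then 1 else 0) = 1"
proof -
  have fin: "finite {v. (u, v) \<in> E}" using out_sub[OF assms] finV finite_subset by blast
  have "(\<Sum>v\<in>V. wt E u v) = (\<Sum>v\<in>V. if v \<in> {v. (u,v) \<in> E} then 1 / real (outdeg E u) else 0)"
    unfolding wt_def by simp
  also have "\<dots> = (\<Sum>v\<in>V \<inter> {v. (u,v) \<in> E}. 1 / real (outdeg E u))"
    by (rule sum.inter_restrict[OF finV, symmetric])
  also have "V \<inter> {v. (u,v) \<in> E} = {v. (u,v) \<in> E}" using out_sub[OF assms] by blast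
  finally have "(\<Sum>v\<in>V. wt E u v) = real (outdeg E u) * (1 / real (outdeg E u))"
    by (simp add: outdeg_def)
  then show ?thesis by auto
qed

lemma fit_pos: "u \<in> V \<Longrightarrow> fit M X u > 0"
  using x1 y0 by (auto simp: fit_def sc_mut_def split: sum.split)
lemma fit_le: "fit M X u \<le> x"
  using x1 y1 by (auto simp: fit_def sc_mut_def split: sum.split)

lemma F_pos: "(\<Sum>z\<in>V. fit M X z) > 0"
  by (rule sum_pos) (use finV z0V fit_pos in auto)

lemma F_le: "(\<Sum>z\<in>V. fit M X z) \<le> real n * x"
proof -
  have "(\<Sum>z\<in>V. fit M X z) \<le> (\<Sum>z\<in>V. x)" by (rule sum_mono) (simp add: fit_le)
  then show ?thesis by simp
qed

lemma P_const: "P (\<lambda>_. c) X = c"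
proof -
  have "P (\<lambda>_. c) X = (\<Sum>u\<in>V. fit M X u / (\<Sum>z\<in>V. fit M X z) * c)"
    unfolding P_def
  proof (rule sum.cong[OF refl])
    fix u assume u: "u \<in> V"
    have "(\<Sum>v\<in>V. wt E u v * c) + (if outdeg E u = 0 then c else 0)
        = c * ((\<Sum>v\<in>V. wt E u v) + (if outdeg E u = 0 then 1 else 0))"
      by (simp add: sum_distrib_left algebra_simps)
    then show "fit M X u / (\<Sum>z\<in>V. fit M X z) * ((\<Sum>v\<in>V. wt E u v * c) + (if outdeg E u = 0 then c else 0))
       = fit M X u / (\<Sum>z\<in>V. fit M X z) * c" using inner1[OF u] by simp
  qed
  also have "\<dots> = c" using F_pos[of X]
    by (simp add: sum_distrib_right[symmetric] sum_divide_distrib[symmetric])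
  finally show ?thesis .
qed

lemma wt_nonneg: "wt E u v \<ge> 0" by (simp add: wt_def)

lemma P_mono: assumes "\<And>Y. g Y \<le> h Y" shows "P g X \<le> P h X"
  unfolding P_def
proof (rule sum_mono)
  fix u assume "u \<in> V"
  have w: "fit M X u / (\<Sum>z\<in>V. fit M X z) \<ge> 0" using F_pos[of X] fit_pos[OF \<open>u \<in> V\<close>, of X] by simp
  have "(\<Sum>v\<in>V. wt E u v * g (upd X u v)) \<le> (\<Sum>v\<in>V. wt E u v * h (upd X u v))"
    by (rule sum_mono) (simp add: mult_left_mono assms wt_nonneg)
  moreover have "(if outdeg E u = 0 then g X else 0) \<le> (if outdeg E u = 0 then h X else 0)"
    using assms by simp
  ultimately show "fit M X u / (\<Sum>z\<in>V. fit M X z) * ((\<Sum>v\<in>V. wt E u v * g (upd X u v)) + (if outdeg E u = 0 then g X else 0))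
    \<le> fit M X u / (\<Sum>z\<in>V. fit M X z) * ((\<Sum>v\<in>V. wt E u v * h (upd X u v)) + (if outdeg E u = 0 then h X else 0))"
    using w by (intro mult_left_mono) auto
qed

lemma P_add: "P (\<lambda>Y. g Y + h Y) X = P g X + P h X"
proof -
  have "P (\<lambda>Y. g Y + h Y) X = (\<Sum>u\<in>V. fit M X u / (\<Sum>z\<in>V. fit M X z) *
          ((\<Sum>v\<in>V. wt E u v * g (upd X u v)) + (if outdeg E u = 0 then g X else 0))
        + fit M X u / (\<Sum>z\<in>V. fit M X z) *
          ((\<Sum>v\<in>V. wt E u v * h (upd X u v)) + (if outdeg E u = 0 then h X else 0)))"
    unfolding P_def
  proof (rule sum.cong[OF refl])
    fix u
    have s: "(\<Sum>v\<in>V. wt E u v * (g (upd X u v) + h (upd X u v)))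
        = (\<Sum>v\<in>V. wt E u v * g (upd X u v)) + (\<Sum>v\<in>V. wt E u v * h (upd X u v))"
      by (simp only: distrib_left sum.distrib)
    have i: "(if outdeg E u = 0 then g X + h X else 0)
        = (if outdeg E u = 0 then g X else 0) + (if outdeg E u = 0 then h X else 0)" by simp
    show "fit M X u / (\<Sum>z\<in>V. fit M X z) * ((\<Sum>v\<in>V. wt E u v * (g (upd X u v) + h (upd X u v))) + (if outdeg E u = 0 then g X + h X else 0))
      = fit M X u / (\<Sum>z\<in>V. fit M X z) * ((\<Sum>v\<in>V. wt E u v * g (upd X u v)) + (if outdeg E u = 0 then g X else 0))
        + fit M X u / (\<Sum>z\<in>V. fit M X z) * ((\<Sum>v\<in>V. wt E u v * h (upd X u v)) + (if outdeg E u = 0 then h X else 0))"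
      unfolding s i by (simp only: distrib_left add_ac)
  qed
  then show ?thesis unfolding P_def by (simp only: sum.distrib)
qed

lemma P_shift: "P (\<lambda>Y. g Y - c) X = P g X - c"
proof -
  have "(\<lambda>Y. g Y - c) = (\<lambda>Y. g Y + (\<lambda>_. - c) Y)" by simp
  then have "P (\<lambda>Y. g Y - c) X = P g X + P (\<lambda>_. - c) X" using P_add[of g "\<lambda>_. - c" X] by simp
  then show ?thesis using P_const[of "-c" X] by simp
qed

abbreviation "D \<equiv> 1 / real n + (real n - 1) * y"
lemma D_ge: "D \<ge> 1 / real n" "D > 0"
proof -
  have "real n \<ge> 1" using n_pos by simp
  then have "(real n - 1) * y \<ge> 0" using y0 by simp
  then show "D \<ge> 1 / real n" by simp
  moreover have "1 / real n > 0" using n_pos by simp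
  ultimately show "D > 0" by linarith
qed
lemma q_pos: "q > 0" using n_pos D_ge unfolding q_def by simp
lemma q_le1: "q \<le> 1" using D_ge unfolding q_def by (simp only: divide_le_eq_1_pos)
lemma q_lt1: assumes "n \<ge> 2" shows "q < 1"
proof -
  have "(real n - 1) * y > 0" using assms y0 by simp
  then have "1 / real n < D" by simp
  then show ?thesis using D_ge unfolding q_def by (simp only: divide_less_eq_1_pos)
qed
lemma q_eq: "q * (real n - 1) * y = (1 - q) / real n"
proof -
  have "q * D = 1 / real n" using D_ge unfolding q_def by simp
  then show ?thesis by (simp add: algebra_simps diff_divide_distrib)
qed

lemma f_nonneg: "f X \<ge> 0" using q_pos by (simp add: f_def)
lemma f_le1: "f X \<le> 1" using q_pos q_le1 by (simp add: f_def power_le_one)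

lemma good_remove: "good X \<Longrightarrow> good (X - {v})" by (auto simp: good_def)

lemma good_insert:
  assumes "good X" "Inl A \<in> X" "(Inl A, w) \<in> E"
  shows "good (insert w X)" "insert w X \<inter> V1 = X \<inter> V1"
proof -
  obtain b where w: "w = Inr b" "A \<in> S" "b \<in> A" using assms(3) by (auto simp: sc_E_def sc_V1_def sc_V2_def)
  have "a \<notin> A" using assms(1,2) by (auto simp: good_def)
  then have "b \<noteq> a" using w by auto
  moreover have "w \<in> V" using w UU by (auto simp: sc_V_def sc_V2_def)
  ultimately show "good (insert w X)" using assms(1) w by (auto simp: good_def)
  show "insert w X \<inter> V1 = X \<inter> V1" using w by (auto simp: sc_V1_def)
qed

definition "eta = q ^ N * (1 - q) * (1 / real N - 1 / real n) / (real n * x)"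

lemma stepB:
  assumes gX: "good X" and ne: "X \<inter> V1 \<noteq> {}"
  shows "f X + eta \<le> P f X"
proof -
  define m where "m = card (X \<inter> V1)"
  define k where "k = card (X \<inter> V2)"
  define F where "F = (\<Sum>z\<in>V. fit M X z)"
  define d where "d = q ^ (m - 1) - q ^ m"
  have XV: "X \<subseteq> V" using gX by (simp add: good_def)
  have z0X: "z0 \<notin> X" using gX by (simp add: good_def)
  have m1: "m \<ge> 1" using ne finV1 m_def by (simp add: Suc_le_eq card_gt_0_iff)
  have mN: "m \<le> N" unfolding m_def using finV1 by (simp add: card_mono)
  have N1: "N \<ge> 1" using m1 mN by simp
  have n2: "n \<ge> 2" using N1 N_lt by simp
  have Fpos: "F > 0" using F_pos F_def by simp
  have fX: "f X = q ^ m" using gX by (simp add: f_def m_def)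
  have qm: "q ^ m = q * q ^ (m - 1)"
  proof -
    from m1 obtain j where "m = Suc j" by (cases m) auto
    then show ?thesis by simp
  qed
  have d_eq: "d = q ^ (m - 1) * (1 - q)" unfolding d_def using qm by (simp add: algebra_simps)
  have qm1: "q ^ m \<le> q ^ (m-1)" using qm q_le1 q_pos by simp
  have fge: "f Y \<ge> q ^ m" if "good Y" "card (Y \<inter> V1) \<le> m" for Y
    using that q_pos q_le1 by (simp add: f_def power_decreasing)
  define T where "T u = fit M X u / F *
          ((\<Sum>v\<in>V. wt E u v * f (upd X u v)) + (if outdeg E u = 0 then f X else 0))" for u
  define L where "L u = fit M X u / F * q ^ m - (if u \<in> X \<inter> V2 then y / F * q ^ m else 0)
      + (if u = z0 then real m * d / (F * real N) else 0)" for u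
  have PT: "P f X = (\<Sum>u\<in>V. T u)" unfolding P_def T_def F_def by simp
  have LT: "L u \<le> T u" if uV: "u \<in> V" for u
  proof (cases "u = z0")
    case True
    have od: "outdeg E z0 = N" by (simp add: outdeg_def out_z0)
    have wz: "wt E z0 v = (if v \<in> V1 then 1 / real N else 0)" for v
      using out_z0 od by (auto simp: wt_def)
    have fv: "f (upd X z0 v) = q ^ m + (if v \<in> X then d else 0)" if "v \<in> V1" for v
    proof -
      have u: "upd X z0 v = X - {v}" using z0X by (simp add: upd_def)
      have c: "(X - {v}) \<inter> V1 = (X \<inter> V1) - {v}" by auto
      have "card ((X - {v}) \<inter> V1) = (if v \<in> X then m - 1 else m)"
        unfolding c m_def using that finV1 by auto
      then show ?thesis using good_remove[OF gX, of v] u d_def by (simp add: f_def)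
    qed
    have "(\<Sum>v\<in>V. wt E z0 v * f (upd X z0 v))
        = (\<Sum>v\<in>V. if v \<in> V1 then 1 / real N * f (upd X z0 v) else 0)"
      by (rule sum.cong[OF refl]) (simp add: wz)
    also have "\<dots> = (\<Sum>v\<in>V \<inter> V1. 1 / real N * f (upd X z0 v))"
      by (rule sum.inter_restrict[OF finV, symmetric])
    also have "V \<inter> V1 = V1" by (auto simp: sc_V_def)
    also have "(\<Sum>v\<in>V1. 1 / real N * f (upd X z0 v))
        = (\<Sum>v\<in>V1. 1 / real N * q ^ m + (if v \<in> X then d / real N else 0))"
      by (rule sum.cong[OF refl]) (simp add: fv algebra_simps)
    also have "\<dots> = real N * (1 / real N * q ^ m) + (\<Sum>v\<in>V1 \<inter> X. d / real N)"
      by (simp add: sum.distrib sum.inter_restrict[OF finV1, symmetric] del: sum.inter_restrict)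
    also have "\<dots> = q ^ m + real m * d / real N"
      using N1 by (simp add: m_def Int_commute)
    finally have s: "(\<Sum>v\<in>V. wt E z0 v * f (upd X z0 v)) = q ^ m + real m * d / real N" .
    have fz: "fit M X z0 = 1" using z0X by (simp add: fit_def)
    have "T z0 = 1 / F * (q ^ m + real m * d / real N)"
      unfolding T_def using s od N1 fz by simp
    also have "\<dots> = L z0" unfolding L_def using z0X fz by (simp add: add_divide_distrib)
    finally show ?thesis using True by simp
  next
    case False
    show ?thesis
    proof (cases "u \<in> X \<inter> V2")
      case True
      then have "fit M X u = y" by (auto simp: fit_def sc_mut_def sc_V2_def)
      then have "L u = 0" using True False by (simp add: L_def)
      moreover have "T u \<ge> 0" unfolding T_def using Fpos fit_pos[OF uV, of X]
        by (intro mult_nonneg_nonneg add_nonneg_nonneg sum_nonneg)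
          (auto simp: f_nonneg wt_nonneg)
      ultimately show ?thesis by simp
    next
      case notX2: False
      have L: "L u = fit M X u / F * q ^ m" unfolding L_def if_not_P[OF notX2] if_not_P[OF False] by simp
      have ge: "wt E u v * q ^ m \<le> wt E u v * f (upd X u v)" if "v \<in> V" for v
      proof (cases "(u, v) \<in> E")
        case False then show ?thesis by (simp add: wt_def)
      next
        case True
        have "q ^ m \<le> f (upd X u v)"
        proof (cases "u \<in> X")
          case False
          then have "upd X u v = X - {v}" by (simp add: upd_def)
          moreover have "card ((X - {v}) \<inter> V1) \<le> m" unfolding m_def using finV1
            by (intro card_mono) auto
          ultimately show ?thesis using fge good_remove[OF gX] by simp
        next
          case uX: True
          then have "u \<in> V1" using notX2 uV by (auto simp: sc_V_def)
          then obtain A where A: "u = Inl A" by (auto simp: sc_V1_def)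
          have "upd X u v = insert v X" using uX by (simp add: upd_def)
          then show ?thesis using good_insert[OF gX, of A v] uX A True fX fge by (simp add: f_def m_def)
        qed
        then show ?thesis by (simp add: mult_left_mono wt_nonneg)
      qed
      have "(\<Sum>v\<in>V. wt E u v * q ^ m) + (if outdeg E u = 0 then q ^ m else 0)
          \<le> (\<Sum>v\<in>V. wt E u v * f (upd X u v)) + (if outdeg E u = 0 then f X else 0)"
        using ge fX by (intro add_mono sum_mono) auto
      moreover have "(\<Sum>v\<in>V. wt E u v * q ^ m) + (if outdeg E u = 0 then q ^ m else 0) = q ^ m"
      proof -
        have "(\<Sum>v\<in>V. wt E u v * q ^ m) + (if outdeg E u = 0 then q ^ m else 0)
            = ((\<Sum>v\<in>V. wt E u v) + (if outdeg E u = 0 then 1 else 0)) * q ^ m"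
          by (simp add: sum_distrib_right distrib_right)
        then show ?thesis using inner1[OF uV] by simp
      qed
      ultimately show ?thesis unfolding T_def L using Fpos fit_pos[OF uV, of X]
        by (intro mult_left_mono) auto
    qed
  qed
  have sumL: "(\<Sum>u\<in>V. L u) = q ^ m - real k * (y / F * q ^ m) + real m * d / (F * real N)"
  proof -
    have a: "(\<Sum>u\<in>V. fit M X u / F * q ^ m) = q ^ m"
      using Fpos by (simp add: sum_distrib_right[symmetric] sum_divide_distrib[symmetric] F_def)
    have b: "(\<Sum>u\<in>V. if u \<in> X \<inter> V2 then y / F * q ^ m else 0) = real k * (y / F * q ^ m)"
    proof -
      have "(\<Sum>u\<in>V. if u \<in> X \<inter> V2 then y / F * q ^ m else 0) = (\<Sum>u\<in>V \<inter> (X \<inter> V2). y / F * q ^ m)"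
        by (rule sum.inter_restrict[OF finV, symmetric])
      also have "V \<inter> (X \<inter> V2) = X \<inter> V2" using XV by auto
      finally show ?thesis by (simp add: k_def)
    qed
    have c: "(\<Sum>u\<in>V. if u = z0 then real m * d / (F * real N) else 0) = real m * d / (F * real N)"
      using z0V(1) by (subst sum.delta[OF finV]) simp
    show ?thesis unfolding L_def using a b c by (simp add: sum.distrib sum_subtractf)
  qed
  have kb: "k \<le> n - 1"
  proof -
    have "X \<inter> V2 \<subseteq> V - {z0}" using XV z0X by auto
    then have "k \<le> card (V - {z0})" unfolding k_def using finV by (intro card_mono) auto
    then show ?thesis using z0V finV by simp
  qed
  have key: "real k * (y * q ^ m) \<le> q ^ (m - 1) * ((1 - q) / real n)"
  proof -
    have "real k * (y * q ^ m) \<le> (real n - 1) * (y * q ^ m)"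
      using kb n_pos y0 q_pos by (intro mult_right_mono) auto
    also have "\<dots> = q ^ (m - 1) * (q * (real n - 1) * y)" using qm by (simp add: algebra_simps)
    also have "\<dots> = q ^ (m - 1) * ((1 - q) / real n)" by (simp add: q_eq)
    finally show ?thesis .
  qed
  have md: "real m * d \<ge> q ^ (m - 1) * (1 - q)"
  proof -
    have d0: "d \<ge> 0" using d_eq q_le1 q_pos by simp
    have "1 * d \<le> real m * d" using m1 d0 by (intro mult_right_mono) auto
    then show ?thesis using d_eq by simp
  qed
  define Z where "Z = q ^ (m - 1) * (1 - q) * (1 / real N - 1 / real n)"
  have pos: "0 \<le> (1 - q) * (1 / real N - 1 / real n)"
  proof -
    have "1 / real n \<le> 1 / real N"
      by (rule divide_left_mono) (use N1 N_lt in auto)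
    then show ?thesis using q_le1 by (intro mult_nonneg_nonneg) auto
  qed
  have Z0: "0 \<le> Z" unfolding Z_def using pos q_pos by (simp add: mult.assoc)
  have nx: "0 < real n * x" using x1 n_pos by simp
  have "eta \<le> Z / (real n * x)"
  proof -
    have qq: "q ^ N \<le> q ^ (m - 1)" using q_pos q_le1 mN by (intro power_decreasing) auto
    have "q ^ N * ((1 - q) * (1 / real N - 1 / real n)) \<le> q ^ (m - 1) * ((1 - q) * (1 / real N - 1 / real n))"
      by (rule mult_right_mono[OF qq pos])
    then show ?thesis unfolding eta_def Z_def using nx
      by (simp add: mult.assoc divide_right_mono)
  qed
  also have "Z / (real n * x) \<le> Z / F"
    by (rule divide_left_mono[OF _ Z0]) (use F_le[of X] Fpos nx in \<open>auto simp: F_def\<close>)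
  also have "Z = q ^ (m - 1) * (1 - q) / real N - q ^ (m - 1) * ((1 - q) / real n)"
    unfolding Z_def by (simp add: right_diff_distrib)
  also have "(q ^ (m - 1) * (1 - q) / real N - q ^ (m - 1) * ((1 - q) / real n)) / F
      \<le> (real m * d / real N - real k * (y * q ^ m)) / F"
  proof (rule divide_right_mono)
    have "q ^ (m - 1) * (1 - q) / real N \<le> real m * d / real N"
      using md N1 by (simp add: divide_right_mono)
    then show "q ^ (m - 1) * (1 - q) / real N - q ^ (m - 1) * ((1 - q) / real n)
      \<le> real m * d / real N - real k * (y * q ^ m)" using key by linarith
  qed (use Fpos in simp)
  also have "(real m * d / real N - real k * (y * q ^ m)) / F
      = (real m * d / real N) / F - (real k * (y * q ^ m)) / F"
    by (rule diff_divide_distrib)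
  also have "(real m * d / real N) / F = real m * d / (F * real N)"
    by (simp add: mult.commute)
  also have "(real k * (y * q ^ m)) / F = real k * (y / F * q ^ m)"
    by simp
  finally have "eta \<le> real m * d / (F * real N) - real k * (y / F * q ^ m)" .
  then have "f X + eta \<le> (\<Sum>u\<in>V. L u)" using sumL fX by linarith
  also have "\<dots> \<le> P f X" unfolding PT using LT by (intro sum_mono) auto
  finally show ?thesis .
qed


abbreviation "Tg \<equiv> (\<lambda>X :: ('a set + 'a) set. X \<inter> V1 = {})"
abbreviation "r \<equiv> moran_reach V E M Tg"

lemma reach_P: "r (Suc t) X = (if Tg X then 1 else P (r t) X)"
  by (simp add: P_def)

lemma reach_bounds: "0 \<le> r t X \<and> r t X \<le> 1"
proof (induction t arbitrary: X)
  case 0 then show ?case by simp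
next
  case (Suc t)
  have "P (\<lambda>_. 0) X \<le> P (r t) X" "P (r t) X \<le> P (\<lambda>_. 1) X"
    using Suc by (auto intro!: P_mono)
  then show ?case unfolding reach_P by (simp add: P_const)
qed

lemma key: assumes e0: "eta \<ge> 0" shows "f X - max 0 (1 - eta * real t) \<le> r t X"
proof (induction t arbitrary: X)
  case 0
  show ?case using f_le1[of X] reach_bounds[of 0 X] by simp
next
  case (Suc t)
  show ?case
  proof (cases "Tg X")
    case True then show ?thesis using f_le1[of X] by simp
  next
    case nT: False
    show ?thesis
    proof (cases "good X")
      case False
      then have "f X = 0" by (simp add: f_def)
      moreover have "0 \<le> r (Suc t) X" using reach_bounds by blast
      ultimately show ?thesis by linarith
    next
      case True
      have "P (\<lambda>Y. f Y - max 0 (1 - eta * real t)) X \<le> P (r t) X"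
        using Suc by (intro P_mono)
      moreover have "r (Suc t) X = P (r t) X"
        by (simp only: reach_P if_not_P[OF nT])
      ultimately have "f X + eta - max 0 (1 - eta * real t) \<le> r (Suc t) X"
        using stepB[OF True nT] by (simp only: P_shift)
      moreover have "max 0 (1 - eta * real t) - eta \<le> max 0 (1 - eta * real (Suc t))"
        using e0 by (simp add: algebra_simps)
      ultimately show ?thesis by linarith
    qed
  qed
qed

lemma final:
  assumes gX: "good X1"
  shows "q ^ N \<le> moran_hit V E M Tg X1"
proof -
  have bdd: "bdd_above (range (\<lambda>t. r t X1))"
    using reach_bounds by (intro bdd_aboveI[of _ 1]) auto
  have up: "r t X1 \<le> moran_hit V E M Tg X1" for t
    unfolding moran_hit_def by (rule cSUP_upper[OF UNIV_I bdd])
  show ?thesis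
  proof (cases "Tg X1")
    case True
    then have "r 0 X1 = 1" by simp
    moreover have "q ^ N \<le> 1" using q_pos q_le1 by (simp add: power_le_one)
    ultimately show ?thesis using up[of 0] by simp
  next
    case False
    have XV: "X1 \<inter> V1 \<subseteq> V1" by auto
    have "card (X1 \<inter> V1) > 0" using False finV1 by (simp add: card_gt_0_iff)
    then have N1: "N \<ge> 1" using card_mono[OF finV1 XV] by linarith
    have n2: "n \<ge> 2" using N1 N_lt by simp
    have "1 / real n < 1 / real N" by (rule divide_strict_left_mono) (use N1 N_lt in auto)
    then have epos: "eta > 0" unfolding eta_def using q_pos q_lt1[OF n2] x1 n_pos
      by (intro divide_pos_pos mult_pos_pos) auto
    define t where "t = nat \<lceil>1 / eta\<rceil>"
    have "1 / eta \<le> real t" unfolding t_def by linarith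
    then have "1 \<le> eta * real t" using epos by (simp add: field_simps)
    then have "f X1 \<le> r t X1" using key[of X1 t] epos by simp
    moreover have "q ^ N \<le> f X1" using gX q_pos q_le1 card_mono[OF finV1 XV]
      by (simp add: f_def power_decreasing)
    ultimately show ?thesis using up[of t] by linarith
  qed
qed

end

theorem lemma3:
  fixes U :: "'a set" and S :: "'a set set" and k :: nat and x y :: real
    and X1 :: "('a set + 'a) set"
  assumes "finite U" and "U = \<Union> S"
    and "x \<ge> 1" and "0 < y" and "y \<le> 1"
    and "X1 \<subseteq> sc_V U S"
    and "\<exists>v \<in> sc_V2 U - X1. \<not> (\<exists>u \<in> X1 \<inter> sc_V1 S. (u, v) \<in> sc_E U S)"
  shows "((1 / real (card (sc_V U S))) /
            (1 / real (card (sc_V U S)) + (real (card (sc_V U S)) - 1) * y))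
           ^ card (sc_V1 S)
         \<le> moran_hit (sc_V U S) (sc_E U S) (sc_mut x y) (\<lambda>X. X \<inter> sc_V1 S = {}) X1"
proof -
  obtain v where v: "v \<in> sc_V2 U - X1" "\<not> (\<exists>u \<in> X1 \<inter> sc_V1 S. (u, v) \<in> sc_E U S)"
    using assms(7) by blast
  then obtain a where a: "v = Inr a" "a \<in> U" by (auto simp: sc_V2_def)
  interpret lem3 U S x y a using assms a by unfold_locales auto
  have "good X1" unfolding good_def
  proof (intro conjI allI impI)
    show "X1 \<subseteq> V" by fact
    show "z0 \<notin> X1" using v a by simp
  next
    fix A assume A: "Inl A \<in> X1"
    then have AS: "A \<in> S" using assms(6) by (auto simp: sc_V_def sc_V1_def sc_V2_def)
    then have "Inl A \<in> X1 \<inter> V1" using A by (simp add: sc_V1_def)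
    then show "a \<notin> A" using v a AS by (auto simp: sc_E_def)
  qed
  from final[OF this] show ?thesis by (simp add: q_def)
qed

end
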